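(* Let $G=(V,E)$ be a connected undirected graph with $n\ge2$ nodes and let $0\le k<n$. There exists an initial state with exactly $k$ colored nodes for which the expected convergence time of the \textsc{Random Pick} process on $G$ equals $1$ if and only if $G$ has a vertex cover of size $k$.
   Context: An undirected graph is one with $(v,u)\in E\iff(u,v)\in E$. A vertex cover is a set $V'\subseteq V$ containing at least one endpoint of every edge. A state is a map $V\to\{b,r,u\}$ (blue, red, uncolored); colored means blue or red. \textsc{Random Pick} process: in each round every node with at least one neighbor picks a neighbor uniformly at random, independently; an uncolored node adopts the color of its pick if the pick is colored, and all other nodes keep their color. A state is stable if no uncolored node has a colored neighbor; the convergence time is the first round $t\ge0$ at which the state is stable. *)

theory Defs
  imports "HOL-Probability.Probability"
begin

datatype color = Blue | Red | Unc

type_synonym 'a state = "'a \<Rightarrow> color"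

definition colored :: "color \<Rightarrow> bool" where
  "colored c \<longleftrightarrow> c = Blue \<or> c = Red"

definition nbrs :: "('a \<times> 'a) set \<Rightarrow> 'a \<Rightarrow> 'a set" where
  "nbrs E v = {w. (v, w) \<in> E}"

definition undirected_graph :: "'a set \<Rightarrow> ('a \<times> 'a) set \<Rightarrow> bool" where
  "undirected_graph V E \<longleftrightarrow> finite V \<and> E \<subseteq> V \<times> V \<and>
     (\<forall>u v. (u, v) \<in> E \<longleftrightarrow> (v, u) \<in> E) \<and> (\<forall>v. (v, v) \<notin> E)"

definition connected_graph :: "'a set \<Rightarrow> ('a \<times> 'a) set \<Rightarrow> bool" where
  "connected_graph V E \<longleftrightarrow> (\<forall>u\<in>V. \<forall>v\<in>V. (u, v) \<in> E\<^sup>*)"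

definition vertex_cover :: "'a set \<Rightarrow> ('a \<times> 'a) set \<Rightarrow> 'a set \<Rightarrow> bool" where
  "vertex_cover V E C \<longleftrightarrow> C \<subseteq> V \<and> (\<forall>(u, v)\<in>E. u \<in> C \<or> v \<in> C)"

definition stable :: "'a set \<Rightarrow> ('a \<times> 'a) set \<Rightarrow> 'a state \<Rightarrow> bool" where
  "stable V E s \<longleftrightarrow> (\<forall>v\<in>V. s v = Unc \<longrightarrow> (\<forall>w\<in>nbrs E v. \<not> colored (s w)))"

definition rp_step :: "'a set \<Rightarrow> ('a \<times> 'a) set \<Rightarrow> 'a state \<Rightarrow> 'a state pmf" where
  "rp_step V E s =
     map_pmf (\<lambda>pick v. if v \<in> V \<and> nbrs E v \<noteq> {} \<and> s v = Unc \<and> colored (s (pick v))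
                        then s (pick v) else s v)
       (Pi_pmf {v\<in>V. nbrs E v \<noteq> {}} undefined (\<lambda>v. pmf_of_set (nbrs E v)))"

fun rp_traj :: "'a set \<Rightarrow> ('a \<times> 'a) set \<Rightarrow> 'a state \<Rightarrow> nat \<Rightarrow> 'a state list pmf" where
  "rp_traj V E s 0 = return_pmf [s]"
| "rp_traj V E s (Suc t) =
     bind_pmf (rp_traj V E s t) (\<lambda>xs. map_pmf (\<lambda>y. xs @ [y]) (rp_step V E (last xs)))"

text \<open>P(T > t): none of the states at rounds 0..t is stable, T the convergence time.\<close>
definition conv_time_gt :: "'a set \<Rightarrow> ('a \<times> 'a) set \<Rightarrow> 'a state \<Rightarrow> nat \<Rightarrow> real" where
  "conv_time_gt V E s t =
     measure_pmf.prob (rp_traj V E s t) {xs. \<forall>x\<in>set xs. \<not> stable V E x}"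

text \<open>Expected convergence time (in [0,\<infinity>]) via E[T] = sum over t of P(T > t).\<close>
definition expected_conv_time :: "'a set \<Rightarrow> ('a \<times> 'a) set \<Rightarrow> 'a state \<Rightarrow> ennreal" where
  "expected_conv_time V E s = (\<Sum>t. ennreal (conv_time_gt V E s t))"

end

theory Submission
  imports Defs
begin

lemma set_rp_step:
  assumes "finite V" "\<And>v. v \<in> V \<Longrightarrow> finite (nbrs E v)"
  shows "set_pmf (rp_step V E s) =
     (\<lambda>pick v. if v \<in> V \<and> nbrs E v \<noteq> {} \<and> s v = Unc \<and> colored (s (pick v))
                        then s (pick v) else s v) ` PiE_dflt {v\<in>V. nbrs E v \<noteq> {}} undefined (\<lambda>v. nbrs E v)"
proof -
  have "set_pmf (Pi_pmf {v\<in>V. nbrs E v \<noteq> {}} undefined (\<lambda>v. pmf_of_set (nbrs E v)))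
      = PiE_dflt {v\<in>V. nbrs E v \<noteq> {}} undefined (set_pmf \<circ> (\<lambda>v. pmf_of_set (nbrs E v)))"
    using assms by (intro set_Pi_pmf) auto
  also have "\<dots> = PiE_dflt {v\<in>V. nbrs E v \<noteq> {}} undefined (\<lambda>v. nbrs E v)"
    using assms unfolding PiE_dflt_def by (auto simp: set_pmf_of_set)
  finally show ?thesis unfolding rp_step_def by simp
qed

lemma traj_shape:
  "xs \<in> set_pmf (rp_traj V E s t) \<Longrightarrow>
     \<exists>ys. xs = s # ys \<and> (t > 0 \<longrightarrow> ys \<noteq> [] \<and> hd ys \<in> set_pmf (rp_step V E s))"
proof (induction t arbitrary: xs)
  case 0
  then show ?case by simp
next
  case (Suc t)
  then obtain xs0 y where xs: "xs = xs0 @ [y]" and x0: "xs0 \<in> set_pmf (rp_traj V E s t)"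
    and y: "y \<in> set_pmf (rp_step V E (last xs0))" by auto
  from Suc.IH[OF x0] obtain ys where ys: "xs0 = s # ys"
    and h: "t > 0 \<longrightarrow> ys \<noteq> [] \<and> hd ys \<in> set_pmf (rp_step V E s)" by blast
  show ?case
  proof (cases t)
    case 0
    then have "xs0 = [s]" using x0 by simp
    then show ?thesis using xs y by simp
  next
    case (Suc m)
    then show ?thesis using xs ys h by auto
  qed
qed

lemma traj_one:
  "y \<in> set_pmf (rp_step V E s) \<Longrightarrow> [s, y] \<in> set_pmf (rp_traj V E s 1)"
  by (auto simp: One_nat_def)

lemma gt0:
  "conv_time_gt V E s 0 = (if stable V E s then 0 else 1)"
  unfolding conv_time_gt_def by simp

lemma gt_stable:
  "stable V E s \<Longrightarrow> conv_time_gt V E s t = 0"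
  unfolding conv_time_gt_def
  by (subst measure_pmf_zero_iff) (auto dest!: traj_shape)

lemma gt_suc_zero:
  assumes "\<And>y. y \<in> set_pmf (rp_step V E s) \<Longrightarrow> stable V E y"
  shows "conv_time_gt V E s (Suc t) = 0"
  unfolding conv_time_gt_def
proof (subst measure_pmf_zero_iff, rule ccontr)
  assume "set_pmf (rp_traj V E s (Suc t)) \<inter> {xs. \<forall>x\<in>set xs. \<not> stable V E x} \<noteq> {}"
  then obtain xs where xs: "xs \<in> set_pmf (rp_traj V E s (Suc t))"
    and ns: "\<forall>x\<in>set xs. \<not> stable V E x" by blast
  from traj_shape[OF xs] obtain ys where "xs = s # ys" "ys \<noteq> []"
    "hd ys \<in> set_pmf (rp_step V E s)" by auto
  then show False using ns assms by (cases ys) auto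
qed

lemma nbrs_nonempty:
  assumes "undirected_graph V E" "connected_graph V E" "card V \<ge> 2" "v \<in> V"
  shows "nbrs E v \<noteq> {}"
proof -
  have fin: "finite V" using assms(1) by (simp add: undirected_graph_def)
  obtain u where u: "u \<in> V" "u \<noteq> v"
  proof -
    have "card (V - {v}) \<ge> 1" using assms(3,4) fin by (simp add: card_Diff_singleton)
    then have "V - {v} \<noteq> {}" by (metis card.empty not_one_le_zero)
    then show ?thesis using that by auto
  qed
  have "(v, u) \<in> E\<^sup>*" using assms(2,4) u by (simp add: connected_graph_def)
  then obtain x where "(v, x) \<in> E" using u(2) by (cases rule: converse_rtranclE) auto
  then show ?thesis by (auto simp: nbrs_def)
qed

lemma crossing:
  assumes "(u, c) \<in> E\<^sup>*" "u \<in> U" "c \<notin> U"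
  shows "\<exists>a b. (a, b) \<in> E \<and> a \<in> U \<and> b \<notin> U"
  using assms(1,3)
proof (induction rule: rtrancl_induct)
  case base
  then show ?case using assms(2) by simp
next
  case (step y z)
  then show ?case by (cases "y \<in> U") auto
qed

theorem mainTheorem15:
  fixes V :: "'a set" and E :: "('a \<times> 'a) set" and k :: nat
  assumes "undirected_graph V E" and "connected_graph V E"
    and "card V \<ge> 2" and "k < card V"
  shows "(\<exists>s :: 'a state. card {v\<in>V. colored (s v)} = k \<and> expected_conv_time V E s = 1)
     \<longleftrightarrow> (\<exists>C. vertex_cover V E C \<and> card C = k)"
proof -
  have fin: "finite V" and EV: "E \<subseteq> V \<times> V" and sym: "\<And>u v. (u, v) \<in> E \<longleftrightarrow> (v, u) \<in> E"
    using assms(1) by (auto simp: undirected_graph_def)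
  have finN: "\<And>v. v \<in> V \<Longrightarrow> finite (nbrs E v)"
    using fin EV by (auto simp: nbrs_def intro: finite_subset[of _ V])
  have ne: "\<And>v. v \<in> V \<Longrightarrow> nbrs E v \<noteq> {}" using nbrs_nonempty[OF assms(1-3)] by blast
  have dom: "{v\<in>V. nbrs E v \<noteq> {}} = V" using ne by auto
  have stepset: "set_pmf (rp_step V E s) = (\<lambda>pick v. if v \<in> V \<and> nbrs E v \<noteq> {} \<and> s v = Unc \<and> colored (s (pick v))
                        then s (pick v) else s v) ` PiE_dflt V undefined (\<lambda>v. nbrs E v)" for s
  proof -
    have "set_pmf (rp_step V E s) = (\<lambda>pick v. if v \<in> V \<and> nbrs E v \<noteq> {} \<and> s v = Unc \<and> colored (s (pick v))
                        then s (pick v) else s v) ` PiE_dflt {v\<in>V. nbrs E v \<noteq> {}} undefined (\<lambda>v. nbrs E v)"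
      by (rule set_rp_step) (use fin finN in auto)
    then show ?thesis unfolding dom .
  qed
  show ?thesis
  proof
    assume "\<exists>s :: 'a state. card {v\<in>V. colored (s v)} = k \<and> expected_conv_time V E s = 1"
    then obtain s :: "'a state" where card: "card {v\<in>V. colored (s v)} = k"
      and ex: "expected_conv_time V E s = 1" by blast
    define C where "C = {v\<in>V. colored (s v)}"
    have ns: "\<not> stable V E s"
    proof
      assume "stable V E s"
      then have "expected_conv_time V E s = 0"
        unfolding expected_conv_time_def by (simp add: gt_stable)
      then show False using ex by simp
    qed
    have cover: "vertex_cover V E C"
    proof (rule ccontr)
      assume "\<not> vertex_cover V E C"
      then obtain u0 w0 where e0: "(u0, w0) \<in> E" "u0 \<notin> C" "w0 \<notin> C"
        unfolding vertex_cover_def C_def by auto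
      have u0V: "u0 \<in> V" "w0 \<in> V" using e0 EV by auto
      define U where "U = {v\<in>V. \<not> colored (s v)}"
      define U' where "U' = {u\<in>U. \<exists>w\<in>U. (u, w) \<in> E}"
      have u0U': "u0 \<in> U'" using e0 u0V unfolding U'_def U_def C_def by auto
      obtain c where c: "c \<in> V" "colored (s c)"
        using ns unfolding stable_def nbrs_def colored_def using EV by auto
      have cU: "c \<notin> U'" using c unfolding U'_def U_def by auto
      have "(u0, c) \<in> E\<^sup>*" using assms(2) u0V c by (simp add: connected_graph_def)
      from crossing[OF this u0U' cU] obtain a b where ab: "(a, b) \<in> E" "a \<in> U'" "b \<notin> U'"
        by blast
      define p where "p = (\<lambda>v. if v \<in> V then (if v \<in> U' then (SOME w. w \<in> U \<and> (v, w) \<in> E)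
                                else (SOME w. (v, w) \<in> E)) else undefined)"
      have pU': "\<And>v. v \<in> U' \<Longrightarrow> p v \<in> U \<and> (v, p v) \<in> E"
      proof -
        fix v assume v: "v \<in> U'"
        then have vV: "v \<in> V" and ex: "\<exists>w. w \<in> U \<and> (v, w) \<in> E" unfolding U'_def U_def by auto
        have "p v = (SOME w. w \<in> U \<and> (v, w) \<in> E)" using v vV unfolding p_def by simp
        then show "p v \<in> U \<and> (v, p v) \<in> E" using someI_ex[OF ex] by simp
      qed
      have pn: "\<And>v. v \<in> V \<Longrightarrow> (v, p v) \<in> E"
      proof -
        fix v assume v: "v \<in> V"
        show "(v, p v) \<in> E"
        proof (cases "v \<in> U'")
          case True then show ?thesis using pU' by blast
        next
          case False
          have "\<exists>w. (v, w) \<in> E" using ne[OF v] by (auto simp: nbrs_def)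
          moreover have "p v = (SOME w. (v, w) \<in> E)" using False v unfolding p_def by simp
          ultimately show ?thesis using someI_ex by metis
        qed
      qed
      have pin: "p \<in> PiE_dflt V undefined (\<lambda>v. nbrs E v)"
        unfolding PiE_dflt_def using pn by (auto simp: nbrs_def p_def)
      define y where "y = (\<lambda>v. if v \<in> V \<and> nbrs E v \<noteq> {} \<and> s v = Unc \<and> colored (s (p v))
                        then s (p v) else s v)"
      have yset: "y \<in> set_pmf (rp_step V E s)"
        unfolding stepset y_def using pin by blast
      have aV: "a \<in> V" and bV: "b \<in> V" using ab EV by auto
      have ya: "y a = Unc"
      proof -
        have "a \<in> U" "p a \<in> U" using ab pU'[of a] unfolding U'_def by auto
        then show ?thesis unfolding y_def U_def colored_def by (cases "s a") auto
      qed
      have yb: "colored (y b)"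
      proof (cases "colored (s b)")
        case True
        then show ?thesis unfolding y_def by (auto simp: colored_def)
      next
        case False
        then have bU: "b \<in> U" using bV unfolding U_def by auto
        then have allc: "\<And>w. (b, w) \<in> E \<Longrightarrow> colored (s w)"
          using ab(3) EV unfolding U'_def U_def by auto
        have "colored (s (p b))" using allc pn bV by blast
        moreover have "s b = Unc" using False by (cases "s b") (auto simp: colored_def)
        ultimately show ?thesis using ne[OF bV] bV unfolding y_def by auto
      qed
      have ynst: "\<not> stable V E y"
        unfolding stable_def using aV ya yb ab(1) by (auto simp: nbrs_def)
      have "0 < conv_time_gt V E s 1"
        unfolding conv_time_gt_def
        by (rule measure_pmf_posI[OF traj_one[OF yset]]) (use ns ynst in auto)
      then have g1: "conv_time_gt V E s 0 + conv_time_gt V E s 1 > 1" using ns by (simp add: gt0)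
      have "(\<Sum>t<2. ennreal (conv_time_gt V E s t)) \<le> expected_conv_time V E s"
        unfolding expected_conv_time_def by (rule sum_le_suminf) auto
      moreover have "(\<Sum>t<2. ennreal (conv_time_gt V E s t)) = ennreal (conv_time_gt V E s 0 + conv_time_gt V E s 1)"
        by (simp add: numeral_2_eq_2 conv_time_gt_def ennreal_plus)
      ultimately have "ennreal (conv_time_gt V E s 0 + conv_time_gt V E s 1) \<le> 1" using ex by simp
      then show False using g1 by (simp add: ennreal_le_1)
    qed
    then show "\<exists>C. vertex_cover V E C \<and> card C = k" using card C_def by blast
  next
    assume "\<exists>C. vertex_cover V E C \<and> card C = k"
    then obtain C where cov: "vertex_cover V E C" and cC: "card C = k" by blast
    have CV: "C \<subseteq> V" using cov by (simp add: vertex_cover_def)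
    define s :: "'a state" where "s = (\<lambda>v. if v \<in> C then Blue else Unc)"
    have cs: "{v\<in>V. colored (s v)} = C" using CV by (auto simp: s_def colored_def)
    obtain v where v: "v \<in> V" "v \<notin> C"
    proof -
      have "\<not> V \<subseteq> C"
      proof
        assume "V \<subseteq> C"
        then have "card V \<le> card C" using CV fin by (intro card_mono) (auto intro: finite_subset)
        then show False using assms(4) cC by simp
      qed
      then show ?thesis using that by blast
    qed
    obtain w where w: "(v, w) \<in> E" using ne[OF v(1)] by (auto simp: nbrs_def)
    have wC: "w \<in> C" using cov w v(2) by (auto simp: vertex_cover_def)
    have ns: "\<not> stable V E s"
      unfolding stable_def using v w wC by (auto simp: s_def nbrs_def colored_def)
    have allst: "\<And>y. y \<in> set_pmf (rp_step V E s) \<Longrightarrow> stable V E y"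
    proof -
      fix y assume "y \<in> set_pmf (rp_step V E s)"
      then obtain p where p: "p \<in> PiE_dflt V undefined (\<lambda>v. nbrs E v)"
        and y: "y = (\<lambda>v. if v \<in> V \<and> nbrs E v \<noteq> {} \<and> s v = Unc \<and> colored (s (p v))
                        then s (p v) else s v)"
        unfolding stepset by blast
      have "\<And>u. u \<in> V \<Longrightarrow> y u \<noteq> Unc"
      proof -
        fix u assume u: "u \<in> V"
        show "y u \<noteq> Unc"
        proof (cases "u \<in> C")
          case True then show ?thesis using y by (auto simp: s_def)
        next
          case False
          have "(u, p u) \<in> E" using p u unfolding PiE_dflt_def by (auto simp: nbrs_def)
          then have "p u \<in> C" using cov False by (auto simp: vertex_cover_def)
          then show ?thesis using y u ne[OF u] False by (auto simp: s_def colored_def)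
        qed
      qed
      then show "stable V E y" by (simp add: stable_def)
    qed
    have "expected_conv_time V E s = (\<Sum>t\<in>{0}. ennreal (conv_time_gt V E s t))"
      unfolding expected_conv_time_def
    proof (rule suminf_finite)
      fix t :: nat assume "t \<notin> {0}"
      then obtain m where "t = Suc m" by (cases t) auto
      then show "ennreal (conv_time_gt V E s t) = 0" using gt_suc_zero[OF allst] by simp
    qed simp
    also have "\<dots> = 1" using ns by (simp add: gt0)
    finally show "\<exists>s :: 'a state. card {v\<in>V. colored (s v)} = k \<and> expected_conv_time V E s = 1"
      using cs cC by blast
  qed
qed

end
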